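(* Let $n \geq 2k \geq 4$ and let $\mathcal F, \mathcal G \subset \binom{[n]}{k}$ be non-trivial, cross-intersecting, initial families. For $P \subset [k+1]$ with $2 \leq |P| \leq k$ let $\mathcal F(P) = \{F \setminus P : F \in \mathcal F,\ F \cap [k+1] = P\}$, $\mathcal G(P) = \{G \setminus P : G \in \mathcal G,\ G \cap [k+1] = P\}$, and $$\alpha(P) = \frac{|\mathcal F(P)|}{\binom{n-k-1}{k-|P|}},\qquad \beta(P) = \frac{|\mathcal G(P)|}{\binom{n-k-1}{k-|P|}}.$$ Then for any disjoint $P, Q \subset [k+1]$ with $2 \le |P|,|Q| \le k$, $$\alpha(P) + \beta(Q) \leq 1.$$
   Context: Families are cross-intersecting if every member of one meets every member of the other; a non-empty family is non-trivial if the intersection of all its members is empty. For $k$-sets $A=\{x_1<\dots<x_k\}$, $B=\{y_1<\dots<y_k\}$, $A\prec B$ means $x_i\le y_i$ for all $i$; a family is initial if $A\prec B\in\mathcal F$ implies $A\in\mathcal F$. *)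

theory Defs
  imports Complex_Main
begin

definition ksets :: "nat \<Rightarrow> nat \<Rightarrow> nat set set" where
  "ksets n k = {A. A \<subseteq> {1..n} \<and> card A = k}"

definition cross_intersecting :: "nat set set \<Rightarrow> nat set set \<Rightarrow> bool" where
  "cross_intersecting F G \<longleftrightarrow> (\<forall>A\<in>F. \<forall>B\<in>G. A \<inter> B \<noteq> {})"

definition nontrivial :: "nat set set \<Rightarrow> bool" where
  "nontrivial F \<longleftrightarrow> F \<noteq> {} \<and> \<Inter>F = {}"

definition shift_prec :: "nat set \<Rightarrow> nat set \<Rightarrow> bool" where
  "shift_prec A B \<longleftrightarrow> card A = card B \<and>
     (\<forall>i<card A. sorted_list_of_set A ! i \<le> sorted_list_of_set B ! i)"

definition initial :: "nat \<Rightarrow> nat \<Rightarrow> nat set set \<Rightarrow> bool" where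
  "initial n k F \<longleftrightarrow> F \<subseteq> ksets n k \<and>
     (\<forall>A B. A \<in> ksets n k \<longrightarrow> shift_prec A B \<longrightarrow> B \<in> F \<longrightarrow> A \<in> F)"

definition restr :: "nat \<Rightarrow> nat set set \<Rightarrow> nat set \<Rightarrow> nat set set" where
  "restr k F P = (\<lambda>A. A - P) ` {A \<in> F. A \<inter> {1..k+1} = P}"

definition dens :: "nat \<Rightarrow> nat \<Rightarrow> nat set set \<Rightarrow> nat set \<Rightarrow> real" where
  "dens n k F P = real (card (restr k F P)) / real ((n - k - 1) choose (k - card P))"

end

theory Submission
  imports Defs
begin

lemma shift_count:
  fixes A B :: "nat set"
  assumes fA: "finite A" and fB: "finite B" and cc: "card A = card B"
    and cnt: "\<And>t. card {z\<in>B. z \<le> t} \<le> card {z\<in>A. z \<le> t}"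
  shows "shift_prec A B"
  unfolding shift_prec_def
proof (intro conjI allI impI)
  show "card A = card B" by fact
  fix i assume i: "i < card A"
  define xs where "xs = sorted_list_of_set A"
  define ys where "ys = sorted_list_of_set B"
  have xs: "sorted xs" "distinct xs" "set xs = A" "length xs = card A"
    using fA by (auto simp: xs_def)
  have ys: "sorted ys" "distinct ys" "set ys = B" "length ys = card B"
    using fB by (auto simp: ys_def)
  define y where "y = ys ! i"
  have iy: "i < length ys" using i ys cc by simp
  have "(\<lambda>j. ys ! j) ` {..i} \<subseteq> {z\<in>B. z \<le> y}"
    using ys iy by (auto simp: y_def intro!: sorted_nth_mono)
  moreover have "card ((\<lambda>j. ys ! j) ` {..i}) = Suc i"
  proof -
    have "inj_on (\<lambda>j. ys ! j) {..i}"
      using ys iy by (auto simp: inj_on_def nth_eq_iff_index_eq)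
    then show ?thesis by (simp add: card_image)
  qed
  moreover have "finite {z\<in>B. z \<le> y}" using fB by simp
  ultimately have c1: "Suc i \<le> card {z\<in>B. z \<le> y}"
    using card_mono by metis
  show "xs ! i \<le> ys ! i"
  proof (rule ccontr)
    assume "\<not> xs ! i \<le> ys ! i"
    hence gt: "y < xs ! i" by (simp add: y_def)
    have "{z\<in>A. z \<le> y} \<subseteq> (\<lambda>j. xs ! j) ` {..<i}"
    proof
      fix z assume z: "z \<in> {z\<in>A. z \<le> y}"
      then obtain j where j: "j < length xs" "z = xs ! j" using xs by (auto simp: in_set_conv_nth)
      have "j < i"
      proof (rule ccontr)
        assume "\<not> j < i"
        hence "xs ! i \<le> xs ! j" using xs j by (auto intro!: sorted_nth_mono)
        thus False using z j gt by auto
      qed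
      thus "z \<in> (\<lambda>j. xs ! j) ` {..<i}" using j by auto
    qed
    note sub = this
    have "card {z\<in>A. z \<le> y} \<le> i"
      using card_mono[OF finite_imageI[OF finite_lessThan] sub] card_image_le[OF finite_lessThan, of "(!) xs" i] by simp
    with c1 cnt[of y] show False by simp
  qed
qed

lemma shift_swap:
  fixes C S T :: "nat set"
  assumes "finite C" "finite S" "finite T" "C \<inter> S = {}" "C \<inter> T = {}" "card S = card T"
    and lt: "\<And>s t. s \<in> S \<Longrightarrow> t \<in> T \<Longrightarrow> s < t"
  shows "shift_prec (C \<union> S) (C \<union> T)"
proof (rule shift_count)
  show "card (C \<union> S) = card (C \<union> T)" using assms by (simp add: card_Un_disjoint)
  fix u
  have e1: "{z\<in>C \<union> S. z \<le> u} = {z\<in>C. z \<le> u} \<union> {z\<in>S. z \<le> u}" by auto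
  have e2: "{z\<in>C \<union> T. z \<le> u} = {z\<in>C. z \<le> u} \<union> {z\<in>T. z \<le> u}" by auto
  have "card {z\<in>T. z \<le> u} \<le> card {z\<in>S. z \<le> u}"
  proof (cases "\<exists>t\<in>T. t \<le> u")
    case True
    then obtain t where "t \<in> T" "t \<le> u" by auto
    hence "{z\<in>S. z \<le> u} = S" using lt by fastforce
    thus ?thesis using assms by (simp add: card_mono)
  next
    case False
    hence "{z\<in>T. z \<le> u} = {}" by auto
    thus ?thesis by (metis card.empty le0)
  qed
  thus "card {z\<in>C \<union> T. z \<le> u} \<le> card {z\<in>C \<union> S. z \<le> u}"
    unfolding e1 e2 using assms by (simp add: card_Un_disjoint disjoint_iff)
qed (use assms in auto)

definition sub :: "nat set \<Rightarrow> nat \<Rightarrow> nat set set" where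
  "sub Y a = {S. S \<subseteq> Y \<and> card S = a}"

lemma dens_le1:
  assumes "finite Y" "A \<subseteq> sub Y a"
  shows "real (card A) / real (card Y choose a) \<le> 1"
proof -
  have "finite (sub Y a)" by (rule finite_subset[of _ "Pow Y"]) (use assms(1) in \<open>auto simp: sub_def\<close>)
  hence "card A \<le> card (sub Y a)" using assms card_mono by blast
  also have "card (sub Y a) = card Y choose a" unfolding sub_def using n_subsets[OF assms(1)] by simp
  finally show ?thesis
    by (cases "card Y choose a = 0") (auto simp: divide_le_eq_1)
qed

lemma base0:
  assumes "finite Y" "A \<subseteq> sub Y 0" "B \<subseteq> sub Y b"
    and ci: "\<forall>S\<in>A. \<forall>T\<in>B. S \<inter> T \<noteq> {}"
  shows "real (card A) / real (card Y choose 0) + real (card B) / real (card Y choose b) \<le> 1"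
proof (cases "A = {}")
  case True thus ?thesis using dens_le1[OF assms(1,3)] by simp
next
  case False
  have "\<And>S. S \<in> A \<Longrightarrow> S = {}"
  proof -
    fix S assume "S \<in> A"
    hence "S \<subseteq> Y" "card S = 0" using assms(2) unfolding sub_def by auto
    moreover have "finite S" using \<open>S \<subseteq> Y\<close> assms(1) finite_subset by blast
    ultimately show "S = {}" by simp
  qed
  hence "A = {{}}" using False by blast
  hence "B = {}" using ci by auto
  thus ?thesis using dens_le1[OF assms(1,2)] by simp
qed

lemma cross_bound:
  assumes "finite Y"
  shows "A \<subseteq> sub Y a \<Longrightarrow> B \<subseteq> sub Y b \<Longrightarrow> \<forall>S\<in>A. \<forall>T\<in>B. S \<inter> T \<noteq> {} \<Longrightarrow> a + b \<le> card Y
    \<Longrightarrow> real (card A) / real (card Y choose a) + real (card B) / real (card Y choose b) \<le> 1"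
  using assms
proof (induction Y arbitrary: A B a b rule: finite_induct)
  case empty
  thus ?case using base0[of "{}" A B b] by simp
next
  case (insert y Y A B a b)
  show ?case
  proof (cases "a = 0 \<or> b = 0")
    case True
    thus ?thesis
    proof
      assume "a = 0" thus ?thesis using base0[of "insert y Y" A B b] insert.prems insert.hyps by simp
    next
      assume b0: "b = 0"
      have ci': "\<forall>S\<in>B. \<forall>T\<in>A. S \<inter> T \<noteq> {}" using insert.prems(3) by blast
      have "real (card B) / real (card (insert y Y) choose 0) + real (card A) / real (card (insert y Y) choose a) \<le> 1"
        by (rule base0) (use insert.prems insert.hyps b0 ci' in auto)
      thus ?thesis using b0 by (simp add: add.commute)
    qed
  next
    case False
    hence a1: "a \<ge> 1" and b1: "b \<ge> 1" by auto
    define m where "m = card Y"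
    define M where "M = Suc m"
    have cY: "card (insert y Y) = M" using insert.hyps by (simp add: M_def m_def)
    have abM: "a + b \<le> M" using insert.prems cY by simp
    define A0 where "A0 = {S\<in>A. y \<notin> S}"
    define A1 where "A1 = (\<lambda>S. S - {y}) ` {S\<in>A. y \<in> S}"
    define B0 where "B0 = {S\<in>B. y \<notin> S}"
    define B1 where "B1 = (\<lambda>S. S - {y}) ` {S\<in>B. y \<in> S}"
    have finA: "finite A" using insert.prems(1) insert.hyps unfolding sub_def
      by (metis (no_types, lifting) finite_Pow_iff finite_insert finite_subset mem_Collect_eq Pow_iff subsetI subset_eq)
    have finB: "finite B" using insert.prems(2) insert.hyps unfolding sub_def
      by (metis (no_types, lifting) finite_Pow_iff finite_insert finite_subset mem_Collect_eq Pow_iff subsetI subset_eq)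
    have cA: "card A = card A0 + card A1"
    proof -
      have "inj_on (\<lambda>S. S - {y}) {S\<in>A. y \<in> S}" unfolding inj_on_def by blast
      hence "card A1 = card {S\<in>A. y \<in> S}" unfolding A1_def by (simp add: card_image)
      moreover have "A = A0 \<union> {S\<in>A. y \<in> S}" "A0 \<inter> {S\<in>A. y \<in> S} = {}" unfolding A0_def by auto
      ultimately show ?thesis using finA by (metis card_Un_disjoint finite_Un)
    qed
    have cB: "card B = card B0 + card B1"
    proof -
      have "inj_on (\<lambda>S. S - {y}) {S\<in>B. y \<in> S}" unfolding inj_on_def by blast
      hence "card B1 = card {S\<in>B. y \<in> S}" unfolding B1_def by (simp add: card_image)
      moreover have "B = B0 \<union> {S\<in>B. y \<in> S}" "B0 \<inter> {S\<in>B. y \<in> S} = {}" unfolding B0_def by auto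
      ultimately show ?thesis using finB by (metis card_Un_disjoint finite_Un)
    qed
    have sA0: "A0 \<subseteq> sub Y a" using insert.prems(1) unfolding A0_def sub_def by auto
    have sB0: "B0 \<subseteq> sub Y b" using insert.prems(2) unfolding B0_def sub_def by auto
    have sA1: "A1 \<subseteq> sub Y (a - 1)" using insert.prems(1) insert.hyps unfolding A1_def sub_def
      by (auto dest: finite_subset)
    have sB1: "B1 \<subseteq> sub Y (b - 1)" using insert.prems(2) insert.hyps unfolding B1_def sub_def
      by (auto dest: finite_subset)
    have ci: "\<forall>S\<in>A. \<forall>T\<in>B. S \<inter> T \<noteq> {}" by fact
    have ci01: "\<forall>S\<in>A0. \<forall>T\<in>B1. S \<inter> T \<noteq> {}" using ci unfolding A0_def B1_def by blast
    have ci10: "\<forall>S\<in>A1. \<forall>T\<in>B0. S \<inter> T \<noteq> {}" using ci unfolding A1_def B0_def by blast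
    have ci00: "\<forall>S\<in>A0. \<forall>T\<in>B0. S \<inter> T \<noteq> {}" using ci unfolding A0_def B0_def by blast
    have h1: "real (card A0) / real (m choose a) + real (card B1) / real (m choose (b-1)) \<le> 1"
      using insert.IH[OF sA0 sB1 ci01] abM a1 b1 by (simp add: m_def M_def)
    have h2: "real (card A1) / real (m choose (a-1)) + real (card B0) / real (m choose b) \<le> 1"
      using insert.IH[OF sA1 sB0 ci10] abM a1 b1 by (simp add: m_def M_def)
    have h3: "a + b \<le> m \<Longrightarrow> real (card A0) / real (m choose a) + real (card B0) / real (m choose b) \<le> 1"
      using insert.IH[OF sA0 sB0 ci00] by (simp add: m_def)
    define x0 where "x0 = real (card A0) / real (m choose a)"
    define x1 where "x1 = real (card A1) / real (m choose (a-1))"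
    define y0 where "y0 = real (card B0) / real (m choose b)"
    define y1 where "y1 = real (card B1) / real (m choose (b-1))"
    have key: "real M * (real (card A) / real (M choose a)) =
        real (card A0) / real (m choose a) * (real M - real a) + real (card A1) / real (m choose (a-1)) * real a"
      if "1 \<le> a" "a \<le> m" "card A = card A0 + card A1" for A A0 A1 :: "nat set set" and a
    proof -
      define c where "c = real (M choose a)"
      define c0 where "c0 = real (m choose a)"
      define c1 where "c1 = real (m choose (a-1))"
      have pas: "M choose a = (m choose (a-1)) + (m choose a)"
        using choose_reduce_nat[of M a] that by (simp add: M_def)
      have i0: "(M - a) * (M choose a) = M * (m choose a)"
        using binomial_absorb_comp[of M a] by (simp add: M_def)
      have i1: "a * (M choose a) = M * (m choose (a-1))"
        using binomial_absorption[of "a-1" M] that by (simp add: M_def)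
      have c0p: "c0 > 0" using that by (simp add: c0_def)
      have c1p: "c1 > 0" using that by (simp add: c1_def)
      have cp: "c > 0" using that by (simp add: c_def M_def)
      have "real ((M - a) * (M choose a)) = real (M * (m choose a))" using i0 by simp
      hence r0': "real (M - a) * c = real M * c0" by (simp only: of_nat_mult c_def c0_def)
      have "real (M - a) = real M - real a" using that by (simp add: M_def)
      with r0' have r0: "(real M - real a) * c = real M * c0" by simp
      have r1: "real a * c = real M * c1"
        using arg_cong[OF i1, of real] by (simp add: c_def c1_def)
      have e0: "real (card A0) / c0 * (real M - real a) = real (card A0) * real M / c"
      proof -
        have "real (card A0) * (real M - real a) * c = real (card A0) * real M * c0"
          using r0 by (metis mult.assoc)
        thus ?thesis using c0p cp by (simp add: field_simps)
      qed
      have e1: "real (card A1) / c1 * real a = real (card A1) * real M / c"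
      proof -
        have "real (card A1) * real a * c = real (card A1) * real M * c1"
          using r1 by (metis mult.assoc)
        thus ?thesis using c1p cp by (simp add: field_simps)
      qed
      show ?thesis unfolding c_def[symmetric] c0_def[symmetric] c1_def[symmetric] e0 e1 that(3)
        by (simp add: field_simps add_divide_distrib)
    qed
    define x0 where "x0 = real (card A0) / real (m choose a)"
    define x1 where "x1 = real (card A1) / real (m choose (a-1))"
    define y0 where "y0 = real (card B0) / real (m choose b)"
    define y1 where "y1 = real (card B1) / real (m choose (b-1))"
    have kA: "real M * (real (card A) / real (M choose a)) = x0 * (real M - real a) + x1 * real a"
      using key[OF a1 _ cA] abM b1 by (simp add: x0_def x1_def M_def)
    have kB: "real M * (real (card B) / real (M choose b)) = y0 * (real M - real b) + y1 * real b"
      using key[OF b1 _ cB] abM a1 by (simp add: y0_def y1_def M_def)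
    have s1: "x0 + y1 \<le> 1" using h1 by (simp add: x0_def y1_def)
    have s2: "x1 + y0 \<le> 1" using h2 by (simp add: x1_def y0_def)
    have s3: "(real M - real a - real b) * (x0 + y0) \<le> real M - real a - real b"
    proof (cases "a + b \<le> m")
      case True
      hence "x0 + y0 \<le> 1" using h3 by (simp add: x0_def y0_def)
      moreover have "real M - real a - real b \<ge> 0" using abM by simp
      ultimately show ?thesis by (simp add: mult_left_le)
    next
      case False
      hence "real M - real a - real b = 0" using abM by (simp add: M_def)
      thus ?thesis by simp
    qed
    have "real M * (real (card A) / real (M choose a) + real (card B) / real (M choose b))
       = real b * (x0 + y1) + real a * (x1 + y0) + (real M - real a - real b) * (x0 + y0)"
      using kA kB by (simp add: algebra_simps)
    also have "\<dots> \<le> real b + real a + (real M - real a - real b)"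
    proof -
      have "real b * (x0 + y1) \<le> real b" using s1 by (simp add: mult_left_le)
      moreover have "real a * (x1 + y0) \<le> real a" using s2 by (simp add: mult_left_le)
      ultimately show ?thesis using s3 by linarith
    qed
    finally have "real M * (real (card A) / real (M choose a) + real (card B) / real (M choose b)) \<le> real M * 1"
      by simp
    hence "real (card A) / real (M choose a) + real (card B) / real (M choose b) \<le> 1"
      by (simp add: M_def)
    thus ?thesis using cY by simp
  qed
qed


theorem claim3p1:
  fixes n k :: nat and F G :: "nat set set" and P Q :: "nat set"
  assumes "n \<ge> 2 * k" and "2 * k \<ge> 4"
    and "F \<subseteq> ksets n k" and "G \<subseteq> ksets n k"
    and "nontrivial F" and "nontrivial G"
    and "cross_intersecting F G"
    and "initial n k F" and "initial n k G"
    and "P \<subseteq> {1..k+1}" and "Q \<subseteq> {1..k+1}" and "P \<inter> Q = {}"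
    and "2 \<le> card P" and "card P \<le> k" and "2 \<le> card Q" and "card Q \<le> k"
  shows "dens n k F P + dens n k G Q \<le> 1"
proof -
  define Y where "Y = {k+2..n}"
  define m where "m = n - k - 1"
  define a where "a = k - card P"
  define b where "b = k - card Q"
  have finY: "finite Y" by (simp add: Y_def)
  have cY: "card Y = m" by (simp add: Y_def m_def)
  have finP: "finite P" using assms(10) finite_subset by blast
  have finQ: "finite Q" using assms(11) finite_subset by blast
  have pq: "card P + card Q \<le> k + 1"
  proof -
    have "card (P \<union> Q) \<le> card {1..k+1}" using assms(10,11) by (intro card_mono) auto
    thus ?thesis using card_Un_disjoint[OF finP finQ assms(12)] by simp
  qed
  have am: "a \<le> m" using assms(1,2,13) by (simp add: a_def m_def)
  have bm: "b \<le> m" using assms(1,2,15) by (simp add: b_def m_def)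
  have restr_sub: "restr k H X \<subseteq> sub Y (k - card X)"
    if "H \<subseteq> ksets n k" "X \<subseteq> {1..k+1}" for H X
  proof
    fix S assume "S \<in> restr k H X"
    then obtain A where A: "A \<in> H" "A \<inter> {1..k+1} = X" "S = A - X" unfolding restr_def by auto
    have Ak: "A \<subseteq> {1..n}" "card A = k" using A(1) that(1) by (auto simp: ksets_def)
    have finA: "finite A" using Ak(1) finite_subset by blast
    have "S \<subseteq> Y" using A Ak unfolding Y_def by auto
    moreover have "card S = k - card X"
    proof -
      have XA: "X \<subseteq> A" using A(2) by blast
      hence "finite X" using finA finite_subset by blast
      thus ?thesis using A(3) Ak(2) XA by (simp add: card_Diff_subset)
    qed
    ultimately show "S \<in> sub Y (k - card X)" by (simp add: sub_def)
  qed
  have sF: "restr k F P \<subseteq> sub Y a" using restr_sub[OF assms(3,10)] by (simp add: a_def)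
  have sG: "restr k G Q \<subseteq> sub Y b" using restr_sub[OF assms(4,11)] by (simp add: b_def)
  have dF: "dens n k F P = real (card (restr k F P)) / real (card Y choose a)"
    by (simp add: dens_def cY m_def a_def)
  have dG: "dens n k G Q = real (card (restr k G Q)) / real (card Y choose b)"
    by (simp add: dens_def cY m_def b_def)
  have ci: "\<forall>S\<in>restr k F P. \<forall>T\<in>restr k G Q. S \<inter> T \<noteq> {}"
  proof (intro ballI)
    fix S T assume S: "S \<in> restr k F P" and T: "T \<in> restr k G Q"
    then obtain A B where A: "A \<in> F" "A \<inter> {1..k+1} = P" "S = A - P"
      and B: "B \<in> G" "B \<inter> {1..k+1} = Q" "T = B - Q" unfolding restr_def by auto
    have "A \<inter> B \<noteq> {}" using assms(7) A(1) B(1) unfolding cross_intersecting_def by blast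
    then obtain z where z: "z \<in> A" "z \<in> B" by blast
    have "z \<notin> {1..k+1}" using z A(2) B(2) assms(12) by blast
    hence "z \<in> S \<inter> T" using z A(2,3) B(2,3) by blast
    thus "S \<inter> T \<noteq> {}" by blast
  qed
  show ?thesis
  proof (cases "a + b \<le> m")
    case True
    thus ?thesis unfolding dF dG using cross_bound[OF finY sF sG ci] cY by simp
  next
    case False
    have noU: False if S: "S \<in> restr k F P" and T: "T \<in> restr k G Q" and U: "S \<union> T = Y" for S T
    proof -
      obtain A B where A: "A \<in> F" "A \<inter> {1..k+1} = P" "S = A - P"
        and B: "B \<in> G" "B \<inter> {1..k+1} = Q" "T = B - Q" using S T unfolding restr_def by auto
      have SY: "S \<subseteq> Y" "card S = a" using sF S by (auto simp: sub_def)
      have TY: "T \<subseteq> Y" "card T = b" using sG T by (auto simp: sub_def)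
      have Ak: "A \<subseteq> {1..n}" "card A = k" using A(1) assms(3) by (auto simp: ksets_def)
      have finA: "finite A" using Ak(1) finite_subset by blast
      define D where "D = S \<inter> T"
      have finS: "finite S" "finite T" using SY TY finY finite_subset by blast+
      have cD: "card D = a + b - m"
        using card_Un_Int[OF finS] U cY SY TY by (simp add: D_def)
      define R where "R = {1..k+1} - (P \<union> Q)"
      have cR: "card R = k + 1 - card P - card Q"
        unfolding R_def using assms(10,11) card_Un_disjoint[OF finP finQ assms(12)]
        by (simp add: card_Diff_subset finP finQ)
      have "card D \<le> card R" unfolding cD cR using assms(1,2,13,14,15,16) pq
        by (simp add: a_def b_def m_def)
      then obtain R' where R': "R' \<subseteq> R" "card R' = card D" "finite R'"
        by (rule obtain_subset_with_card_n)
      define C where "C = A - D"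
      have DA: "D \<subseteq> A" using A(3) by (auto simp: D_def)
      have finD: "finite D" using finS by (simp add: D_def)
      have R'A: "R' \<inter> A = {}" using R' A(2) by (auto simp: R_def)
      have DYk: "\<And>t. t \<in> D \<Longrightarrow> k + 2 \<le> t" using SY by (auto simp: D_def Y_def)
      have sp: "shift_prec (C \<union> R') (C \<union> D)"
      proof (rule shift_swap)
        show "finite C" using finA by (simp add: C_def)
        show "C \<inter> R' = {}" using R'A by (auto simp: C_def)
        show "C \<inter> D = {}" by (auto simp: C_def)
        fix s t assume "s \<in> R'" "t \<in> D"
        hence "s \<le> k + 1" "k + 2 \<le> t" using R' DYk by (auto simp: R_def)
        thus "s < t" by simp
      qed (use R' finD in auto)
      have CD: "C \<union> D = A" using DA by (auto simp: C_def)
      have A'k: "C \<union> R' \<in> ksets n k"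
      proof -
        have "C \<union> R' \<subseteq> {1..n}" using Ak(1) R' assms(1,2) by (auto simp: C_def R_def)
        moreover have "card (C \<union> R') = k" using sp CD Ak by (simp add: shift_prec_def)
        ultimately show ?thesis by (simp add: ksets_def)
      qed
      have "C \<union> R' \<in> F" using assms(8) A'k sp CD A(1) unfolding initial_def by metis
      hence "(C \<union> R') \<inter> B \<noteq> {}" using assms(7) B(1) unfolding cross_intersecting_def by blast
      then obtain z where z: "z \<in> C \<union> R'" "z \<in> B" by blast
      show False
      proof (cases "z \<in> R'")
        case True
        hence "z \<in> {1..k+1}" "z \<notin> Q" using R' by (auto simp: R_def)
        thus False using z B(2) by blast
      next
        case False
        hence zA: "z \<in> A" "z \<notin> D" using z by (auto simp: C_def)
        show False
        proof (cases "z \<in> {1..k+1}")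
          case True
          thus False using zA z A(2) B(2) assms(12) by blast
        next
          case False
          hence "z \<in> S" "z \<in> T" using zA z A B by auto
          thus False using zA by (simp add: D_def)
        qed
      qed
    qed
    define CF where "CF = (\<lambda>S. Y - S) ` restr k F P"
    define CG where "CG = (\<lambda>S. Y - S) ` restr k G Q"
    have injc: "inj_on (\<lambda>S. Y - S) (sub Y c)" for c
      unfolding inj_on_def sub_def by blast
    have cCF: "card CF = card (restr k F P)"
      unfolding CF_def by (rule card_image, rule inj_on_subset[OF injc sF])
    have cCG: "card CG = card (restr k G Q)"
      unfolding CG_def by (rule card_image, rule inj_on_subset[OF injc sG])
    have sCF: "CF \<subseteq> sub Y (m - a)"
      unfolding CF_def
    proof (rule image_subsetI)
      fix S assume "S \<in> restr k F P"
      hence SS: "S \<subseteq> Y" "card S = a" using sF by (auto simp: sub_def)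
      hence "finite S" using finY finite_subset by blast
      thus "Y - S \<in> sub Y (m - a)" using SS cY by (simp add: sub_def card_Diff_subset)
    qed
    have sCG: "CG \<subseteq> sub Y (m - b)"
      unfolding CG_def
    proof (rule image_subsetI)
      fix S assume "S \<in> restr k G Q"
      hence SS: "S \<subseteq> Y" "card S = b" using sG by (auto simp: sub_def)
      hence "finite S" using finY finite_subset by blast
      thus "Y - S \<in> sub Y (m - b)" using SS cY by (simp add: sub_def card_Diff_subset)
    qed
    have ciC: "\<forall>S\<in>CF. \<forall>T\<in>CG. S \<inter> T \<noteq> {}"
    proof (intro ballI)
      fix S' T' assume "S' \<in> CF" "T' \<in> CG"
      then obtain S T where S: "S \<in> restr k F P" "S' = Y - S" and T: "T \<in> restr k G Q" "T' = Y - T"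
        unfolding CF_def CG_def by auto
      have "S \<subseteq> Y" "T \<subseteq> Y" using S T sF sG by (auto simp: sub_def)
      moreover have "S \<union> T \<noteq> Y" using noU S(1) T(1) by blast
      ultimately show "S' \<inter> T' \<noteq> {}" using S(2) T(2) by blast
    qed
    have "(m - a) + (m - b) \<le> card Y" using False cY by simp
    from cross_bound[OF finY sCF sCG ciC this]
    have "real (card CF) / real (m choose (m - a)) + real (card CG) / real (m choose (m - b)) \<le> 1"
      by (simp add: cY)
    moreover have "m choose (m - a) = m choose a" using am by (simp add: binomial_symmetric[symmetric])
    moreover have "m choose (m - b) = m choose b" using bm by (simp add: binomial_symmetric[symmetric])
    ultimately show ?thesis unfolding dF dG cY cCF[symmetric] cCG[symmetric] by simp
  qed
qed

end
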